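(* Let $\tau\ge 0$ be an integer, $\mathcal D=\{0,1,\dots,\tau\}$, let $\{\tau_n\}_{n\in\mathbb Z}$ be an i.i.d. sequence of random variables with values in $\mathcal D$ and $\Pr\{\tau_n=i\}=p_i$ ($\sum_{i=0}^\tau p_i=1$), and let $\alpha_0,\dots,\alpha_\tau$ be real numbers. For integers $k,n$ define $$\omega(k,n)=\begin{cases}\alpha_{k-n}\big[\delta(\tau_n-(k-n))-p_{k-n}\big], & n\le k\le n+\tau,\\ 0,&\text{otherwise},\end{cases}$$ where $\delta$ is the Kronecker delta. For a fixed $n$ define $r(l)=\mathbb E\big\{\sum_{k=-\infty}^{\infty}\omega(k,n)\omega(k+l,n)\big\}$ for $l\in\mathbb Z$ and $S_\Omega(z)=\sum_{l=-\infty}^{\infty} r(l)z^{-l}$. Then $$S_\Omega(z)=\frac12\sum_{i_1,i_2=0}^{\tau}\big(\alpha_{i_1}z^{i_1}-\alpha_{i_2}z^{i_2}\big)\big(\alpha_{i_1}z^{-i_1}-\alpha_{i_2}z^{-i_2}\big)p_{i_1}p_{i_2}.$$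
   Context: $\omega(k,n)$ is the deviation of the (random) impulse response of a channel with random transmission delays from its mean; $S_\Omega$ is called the energy spectral density of the channel uncertainty. *)

theory Defs
  imports "HOL-Probability.Probability"
begin

text \<open>Deviation of the random impulse response from its mean:
  omega(k,n) = alpha_(k-n) [delta(tau_n - (k-n)) - p_(k-n)] for n <= k <= n + T, else 0.
  Here T is the maximal delay, taus n x is the value of tau_n at sample point x.\<close>
definition omega ::
  "nat \<Rightarrow> (nat \<Rightarrow> real) \<Rightarrow> (nat \<Rightarrow> real) \<Rightarrow> (int \<Rightarrow> 'a \<Rightarrow> nat) \<Rightarrow> int \<Rightarrow> int \<Rightarrow> 'a \<Rightarrow> real"
  where
  "omega T alpha p taus k n x =
     (if n \<le> k \<and> k \<le> n + int T
      then alpha (nat (k - n)) * ((if taus n x = nat (k - n) then 1 else 0) - p (nat (k - n)))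
      else 0)"

end

theory Submission
  imports Defs
begin

lemma infsum_support:
  fixes f :: "'b \<Rightarrow> 'c::{comm_monoid_add, t2_space}"
  assumes "finite S" "\<And>x. x \<notin> S \<Longrightarrow> f x = 0"
  shows "infsum f UNIV = sum f S"
proof -
  have "infsum f UNIV = infsum f S"
    by (rule infsum_cong_neutral) (use assms in auto)
  also have "\<dots> = sum f S" using assms(1) by simp
  finally show ?thesis .
qed

definition wv :: "(nat \<Rightarrow> real) \<Rightarrow> (nat \<Rightarrow> real) \<Rightarrow> nat \<Rightarrow> nat \<Rightarrow> real" where
  "wv alpha p i t = alpha i * ((if t = i then 1 else 0) - p i)"

lemma omega_shift:
  "omega T alpha p taus (n + l) n x =
     (\<Sum>j\<le>T. if int j = l then wv alpha p j (taus n x) else 0)"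
proof (cases "0 \<le> l \<and> l \<le> int T")
  case True
  have "(\<Sum>j\<le>T. if int j = l then wv alpha p j (taus n x) else 0)
      = (\<Sum>j\<le>T. if j = nat l then wv alpha p j (taus n x) else 0)"
    by (rule sum.cong) (use True in auto)
  also have "\<dots> = wv alpha p (nat l) (taus n x)" using True by (simp add: sum.delta nat_le_iff)
  finally show ?thesis using True by (simp add: omega_def wv_def)
next
  case False
  then show ?thesis by (auto simp: omega_def intro!: sum.neutral)
qed

lemma inner_sum:
  "(\<Sum>\<^sub>\<infinity>k::int. omega T alpha p taus k n x * omega T alpha p taus (k + l) n x)
   = (\<Sum>i\<le>T. \<Sum>j\<le>T. if int j = int i + l then wv alpha p i (taus n x) * wv alpha p j (taus n x) else 0)"
proof -
  have "(\<Sum>\<^sub>\<infinity>k::int. omega T alpha p taus k n x * omega T alpha p taus (k + l) n x)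
     = (\<Sum>k\<in>(\<lambda>i. n + int i) ` {..T}. omega T alpha p taus k n x * omega T alpha p taus (k + l) n x)"
  proof (rule infsum_support)
    fix k assume "k \<notin> (\<lambda>i. n + int i) ` {..T}"
    moreover have "n \<le> k \<and> k \<le> n + int T \<Longrightarrow> k \<in> (\<lambda>i. n + int i) ` {..T}"
      by (rule image_eqI[of _ _ "nat (k - n)"]) auto
    ultimately have "\<not> (n \<le> k \<and> k \<le> n + int T)" by blast
    thus "omega T alpha p taus k n x * omega T alpha p taus (k + l) n x = 0"
      by (auto simp: omega_def[where k=k])
  qed simp
  also have "\<dots> = (\<Sum>i\<le>T. omega T alpha p taus (n + int i) n x * omega T alpha p taus (n + (int i + l)) n x)"
    by (subst sum.reindex) (auto simp: inj_on_def add.assoc)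
  also have "\<dots> = (\<Sum>i\<le>T. wv alpha p i (taus n x) * (\<Sum>j\<le>T. if int j = int i + l then wv alpha p j (taus n x) else 0))"
    by (rule sum.cong[OF refl], subst omega_shift) (simp add: omega_def wv_def)
  also have "\<dots> = (\<Sum>i\<le>T. \<Sum>j\<le>T. if int j = int i + l then wv alpha p i (taus n x) * wv alpha p j (taus n x) else 0)"
    by (auto simp: sum_distrib_left intro!: sum.cong)
  finally show ?thesis .
qed

lemma (in prob_space) expect_fun:
  fixes X :: "'a \<Rightarrow> nat"
  assumes "X \<in> measurable M (count_space UNIV)"
    and "\<And>x. x \<in> space M \<Longrightarrow> X x \<le> T"
    and "\<And>i. i \<le> T \<Longrightarrow> prob {x \<in> space M. X x = i} = p i"
  shows "expectation (\<lambda>x. g (X x)) = (\<Sum>t\<le>T. g t * p t)"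
proof -
  let ?A = "\<lambda>t. {x \<in> space M. X x = t}"
  have A: "?A t \<in> events" for t
    using measurable_sets[OF assms(1), of "{t}"] by (simp add: vimage_def Int_def conj_commute)
  have "expectation (\<lambda>x. g (X x)) = expectation (\<lambda>x. \<Sum>t\<le>T. g t * indicator (?A t) x)"
  proof (rule Bochner_Integration.integral_cong[OF refl])
    fix x assume x: "x \<in> space M"
    have "(\<Sum>t\<le>T. g t * indicator (?A t) x) = (\<Sum>t\<le>T. if t = X x then g (X x) else 0)"
      by (rule sum.cong) (auto simp: indicator_def x)
    also have "\<dots> = g (X x)" using assms(2)[OF x] by (simp add: sum.delta')
    finally show "g (X x) = (\<Sum>t\<le>T. g t * indicator (?A t) x)" by simp
  qed
  also have "\<dots> = (\<Sum>t\<le>T. expectation (\<lambda>x. g t * indicator (?A t) x))"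
    by (rule Bochner_Integration.integral_sum) (auto intro!: integrable_mult_right integrable_real_indicator A simp: less_top[symmetric])
  also have "\<dots> = (\<Sum>t\<le>T. g t * p t)"
    using A assms(3) by (auto intro!: sum.cong)
  finally show ?thesis .
qed

lemma sum_if_const: "(\<Sum>t\<in>A. if P then f t else 0) = (if P then sum f A else 0)"
  by (cases P) simp_all

lemma rhs_term:
  fixes z :: complex assumes "z \<noteq> 0"
  shows "(a * z ^ i - b * z ^ j) * (a * z powi (- int i) - b * z powi (- int j))
    = a * a + b * b - a * b * z powi (int i - int j) - b * a * z powi (int j - int i)"
proof -
  have e: "z ^ m * z powi (- int k) = z powi (int m - int k)" for m k
    using assms by (simp add: power_int_add[symmetric] flip: power_int_of_nat)
  have "(a * z ^ i - b * z ^ j) * (a * z powi (- int i) - b * z powi (- int j))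
     = a * a * (z ^ i * z powi (- int i)) + b * b * (z ^ j * z powi (- int j))
       - a * b * (z ^ i * z powi (- int j)) - b * a * (z ^ j * z powi (- int i))"
    by (simp add: algebra_simps)
  then show ?thesis by (simp only: e) simp
qed


theorem lemma2:
  fixes M :: "'a measure"
    and T :: nat
    and taus :: "int \<Rightarrow> 'a \<Rightarrow> nat"
    and p alpha :: "nat \<Rightarrow> real"
    and n :: int
    and z :: complex
  assumes "prob_space M"
    and "\<And>m. taus m \<in> measurable M (count_space UNIV)"
    and "prob_space.indep_vars M (\<lambda>_. count_space UNIV) taus UNIV"
    and "\<And>m x. x \<in> space M \<Longrightarrow> taus m x \<le> T"
    and "\<And>m i. i \<le> T \<Longrightarrow> prob_space.prob M {x \<in> space M. taus m x = i} = p i"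
    and "(\<Sum>i\<le>T. p i) = 1"
    and "z \<noteq> 0"
  shows
    "(\<Sum>\<^sub>\<infinity>l::int. complex_of_real
        (prob_space.expectation M
          (\<lambda>x. \<Sum>\<^sub>\<infinity>k::int. omega T alpha p taus k n x * omega T alpha p taus (k + l) n x))
        * z powi (- l))
     = (1/2) * (\<Sum>i1\<le>T. \<Sum>i2\<le>T.
          (of_real (alpha i1) * z ^ i1 - of_real (alpha i2) * z ^ i2)
        * (of_real (alpha i1) * z powi (- int i1) - of_real (alpha i2) * z powi (- int i2))
        * of_real (p i1) * of_real (p i2))"
proof -
  interpret P: prob_space M by (rule assms(1))
  define c where "c i j = (\<Sum>t\<le>T. wv alpha p i t * wv alpha p j t * p t)" for i j
  have E: "P.expectation (\<lambda>x. \<Sum>\<^sub>\<infinity>k::int. omega T alpha p taus k n x * omega T alpha p taus (k + l) n x)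
     = (\<Sum>i\<le>T. \<Sum>j\<le>T. if l = int j - int i then c i j else 0)" for l
  proof -
    have "P.expectation (\<lambda>x. \<Sum>\<^sub>\<infinity>k::int. omega T alpha p taus k n x * omega T alpha p taus (k + l) n x)
      = P.expectation (\<lambda>x. (\<lambda>t. \<Sum>i\<le>T. \<Sum>j\<le>T. if int j = int i + l then wv alpha p i t * wv alpha p j t else 0) (taus n x))"
      by (simp only: inner_sum)
    also have "\<dots> = (\<Sum>t\<le>T. (\<Sum>i\<le>T. \<Sum>j\<le>T. if int j = int i + l then wv alpha p i t * wv alpha p j t else 0) * p t)"
      by (rule P.expect_fun[OF assms(2) assms(4) assms(5)])
    also have "\<dots> = (\<Sum>t\<le>T. \<Sum>i\<le>T. \<Sum>j\<le>T. if l = int j - int i then wv alpha p i t * wv alpha p j t * p t else 0)"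
      by (auto simp: sum_distrib_right intro!: sum.cong)
    also have "\<dots> = (\<Sum>i\<le>T. \<Sum>t\<le>T. \<Sum>j\<le>T. if l = int j - int i then wv alpha p i t * wv alpha p j t * p t else 0)"
      by (rule sum.swap)
    also have "\<dots> = (\<Sum>i\<le>T. \<Sum>j\<le>T. \<Sum>t\<le>T. if l = int j - int i then wv alpha p i t * wv alpha p j t * p t else 0)"
      by (rule sum.cong[OF refl], rule sum.swap)
    also have "\<dots> = (\<Sum>i\<le>T. \<Sum>j\<le>T. if l = int j - int i then c i j else 0)"
      by (simp only: sum_if_const c_def)
    finally show ?thesis .
  qed
  have "(\<Sum>\<^sub>\<infinity>l::int. complex_of_real
        (P.expectation
          (\<lambda>x. \<Sum>\<^sub>\<infinity>k::int. omega T alpha p taus k n x * omega T alpha p taus (k + l) n x))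
        * z powi (- l))
     = (\<Sum>\<^sub>\<infinity>l::int. complex_of_real (\<Sum>i\<le>T. \<Sum>j\<le>T. if l = int j - int i then c i j else 0) * z powi (- l))"
    by (simp only: E)
  also have "\<dots> = (\<Sum>l\<in>{- int T..int T}. complex_of_real (\<Sum>i\<le>T. \<Sum>j\<le>T. if l = int j - int i then c i j else 0) * z powi (- l))"
  proof (rule infsum_support)
    fix l :: int assume "l \<notin> {- int T..int T}"
    hence "(\<Sum>i\<le>T. \<Sum>j\<le>T. if l = int j - int i then c i j else 0) = 0"
      by (auto intro!: sum.neutral)
    thus "complex_of_real (\<Sum>i\<le>T. \<Sum>j\<le>T. if l = int j - int i then c i j else 0) * z powi (- l) = 0"
      by simp
  qed simp
  also have "\<dots> = (\<Sum>l\<in>{- int T..int T}. \<Sum>i\<le>T. \<Sum>j\<le>T. if l = int j - int i then of_real (c i j) * z powi (int i - int j) else 0)"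
    by (auto simp: sum_distrib_right intro!: sum.cong)
  also have "\<dots> = (\<Sum>i\<le>T. \<Sum>l\<in>{- int T..int T}. \<Sum>j\<le>T. if l = int j - int i then of_real (c i j) * z powi (int i - int j) else 0)"
    by (rule sum.swap)
  also have "\<dots> = (\<Sum>i\<le>T. \<Sum>j\<le>T. \<Sum>l\<in>{- int T..int T}. if l = int j - int i then of_real (c i j) * z powi (int i - int j) else 0)"
    by (rule sum.cong[OF refl], rule sum.swap)
  also have "\<dots> = (\<Sum>i\<le>T. \<Sum>j\<le>T. of_real (c i j) * z powi (int i - int j))"
    by (auto simp: sum.delta' intro!: sum.cong)
  also have "\<dots> = (\<Sum>i\<le>T. of_real (alpha i) * of_real (alpha i) * of_real (p i))
      - (\<Sum>i\<le>T. \<Sum>j\<le>T. of_real (alpha i) * of_real (alpha j) * of_real (p i) * of_real (p j) * z powi (int i - int j))"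
  proof -
    have cij: "c i j = alpha i * alpha j * ((if i = j then p i else 0) - p i * p j)" if "i \<le> T" "j \<le> T" for i j
    proof -
      have s1: "(\<Sum>t\<le>T. (if t = i then 1 else 0) * (if t = j then 1 else 0) * p t) = (if i = j then p i else 0)"
      proof -
        have "(\<Sum>t\<le>T. (if t = i then 1 else 0) * (if t = j then 1 else 0) * p t)
          = (\<Sum>t\<le>T. if t = i then (if i = j then p i else 0) else (0::real))"
          by (rule sum.cong) auto
        also have "\<dots> = (if i = j then p i else 0)" using that by simp
        finally show ?thesis .
      qed
      have s2: "(\<Sum>t\<le>T. (if t = k then 1 else 0) * p t) = p k" if "k \<le> T" for k
        using that by (simp add: mult_if_delta)
      have "c i j = alpha i * alpha j * ((\<Sum>t\<le>T. (if t = i then 1 else 0) * (if t = j then 1 else 0) * p t)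
           - p j * (\<Sum>t\<le>T. (if t = i then 1 else 0) * p t) - p i * (\<Sum>t\<le>T. (if t = j then 1 else 0) * p t)
           + p i * p j * (\<Sum>t\<le>T. p t))"
        unfolding c_def wv_def
        by (simp add: sum_distrib_left sum_distrib_right sum_subtractf[symmetric] sum.distrib[symmetric] algebra_simps)
      also have "\<dots> = alpha i * alpha j * ((if i = j then p i else 0) - p i * p j)"
        using that by (simp only: s1 s2 assms(6)) (simp add: algebra_simps)
      finally show ?thesis .
    qed
    have "(\<Sum>i\<le>T. \<Sum>j\<le>T. of_real (c i j) * z powi (int i - int j))
      = (\<Sum>i\<le>T. \<Sum>j\<le>T. (if j = i then of_real (alpha i) * of_real (alpha i) * of_real (p i) else 0)
          - of_real (alpha i) * of_real (alpha j) * of_real (p i) * of_real (p j) * z powi (int i - int j))"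
      by (auto simp: cij algebra_simps intro!: sum.cong)
    also have "\<dots> = (\<Sum>i\<le>T. of_real (alpha i) * of_real (alpha i) * of_real (p i))
      - (\<Sum>i\<le>T. \<Sum>j\<le>T. of_real (alpha i) * of_real (alpha j) * of_real (p i) * of_real (p j) * z powi (int i - int j))"
      by (simp add: sum_subtractf)
    finally show ?thesis .
  qed
  also have "\<dots> = (1/2) * (\<Sum>i1\<le>T. \<Sum>i2\<le>T.
          (of_real (alpha i1) * z ^ i1 - of_real (alpha i2) * z ^ i2)
        * (of_real (alpha i1) * z powi (- int i1) - of_real (alpha i2) * z powi (- int i2))
        * of_real (p i1) * of_real (p i2))"
  proof -
    let ?A = "\<lambda>i. complex_of_real (alpha i)"
    let ?P = "\<lambda>i. complex_of_real (p i)"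
    let ?Z = "\<lambda>i j. z powi (int i - int j)"
    have sP: "(\<Sum>j\<le>T. ?P j) = 1" using assms(6)
      by (metis of_real_1 of_real_sum)
    have "(\<Sum>i1\<le>T. \<Sum>i2\<le>T.
          (?A i1 * z ^ i1 - ?A i2 * z ^ i2) * (?A i1 * z powi (- int i1) - ?A i2 * z powi (- int i2))
        * ?P i1 * ?P i2)
      = (\<Sum>i\<le>T. \<Sum>j\<le>T. ?A i * ?A i * ?P i * ?P j + ?A j * ?A j * ?P i * ?P j
          - ?A i * ?A j * ?P i * ?P j * ?Z i j - ?A j * ?A i * ?P i * ?P j * ?Z j i)"
      by (intro sum.cong refl, subst rhs_term[OF assms(7)]) (simp add: algebra_simps)
    also have "\<dots> = (\<Sum>i\<le>T. \<Sum>j\<le>T. ?A i * ?A i * ?P i * ?P j) + (\<Sum>i\<le>T. \<Sum>j\<le>T. ?A j * ?A j * ?P i * ?P j)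
        - (\<Sum>i\<le>T. \<Sum>j\<le>T. ?A i * ?A j * ?P i * ?P j * ?Z i j) - (\<Sum>i\<le>T. \<Sum>j\<le>T. ?A j * ?A i * ?P i * ?P j * ?Z j i)"
      by (simp add: sum_subtractf sum.distrib)
    also have "(\<Sum>i\<le>T. \<Sum>j\<le>T. ?A j * ?A j * ?P i * ?P j) = (\<Sum>i\<le>T. \<Sum>j\<le>T. ?A i * ?A i * ?P j * ?P i)"
      by (rule sum.swap)
    also have "(\<Sum>i\<le>T. \<Sum>j\<le>T. ?A j * ?A i * ?P i * ?P j * ?Z j i) = (\<Sum>i\<le>T. \<Sum>j\<le>T. ?A i * ?A j * ?P j * ?P i * ?Z i j)"
      by (rule sum.swap)
    also have "(\<Sum>i\<le>T. \<Sum>j\<le>T. ?A i * ?A i * ?P j * ?P i) = (\<Sum>i\<le>T. ?A i * ?A i * ?P i)"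
      by (simp add: sum_distrib_left[symmetric] sum_distrib_right[symmetric] sP mult.commute mult.left_commute)
    also have "(\<Sum>i\<le>T. \<Sum>j\<le>T. ?A i * ?A i * ?P i * ?P j) = (\<Sum>i\<le>T. ?A i * ?A i * ?P i)"
      by (simp add: sum_distrib_left[symmetric] sP)
    also have "(\<Sum>i\<le>T. \<Sum>j\<le>T. ?A i * ?A j * ?P j * ?P i * ?Z i j) = (\<Sum>i\<le>T. \<Sum>j\<le>T. ?A i * ?A j * ?P i * ?P j * ?Z i j)"
      by (simp add: mult_ac)
    finally show ?thesis by simp
  qed
  finally show ?thesis .
qed

end
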